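(* For every admissible $i$, $K^i\subseteq Z^i$, where $Z^i=\{V_\bullet\in\mathrm{Fl}(1^n,s-1)\mid V_{i-1}\subseteq\mathrm{im}(x)\subseteq V_n\subseteq x^{-1}V_{i-1}\}$.
   Context: Fix integers $n\ge 2$ and $s\ge n-1$, let $N=n+s-1$, and let $e_1,\dots,e_N$ be the standard basis of $\mathbb{C}^N$. Let $x:\mathbb{C}^N\to\mathbb{C}^N$ be the linear map with $xe_m=e_{m-(n-1)}$ for $n\le m\le 2n-2$ and $xe_m=0$ otherwise; thus $\mathrm{im}(x)=\mathrm{span}(e_1,\dots,e_{n-1})$. $x^{-1}V$ denotes the preimage of a subspace $V$ under $x$. $\mathrm{Fl}(1^n,s-1)$ is the variety of partial flags $V_\bullet=(0=V_0\subset V_1\subset\cdots\subset V_n\subset\mathbb{C}^N)$ with $\dim V_j=j$. The $\Delta$-Springer fiber is $Y=\{V_\bullet\in\mathrm{Fl}(1^n,s-1)\mid \mathrm{im}(x)\subseteq V_n,\ xV_j\subseteq V_j \text{ for all } j\}$. For distinct $w_1,\dots,w_n\in\{1,\dots,N\}$, the Schubert cell $X_w^\circ$ is the set of flags with $\dim(V_j\cap\mathrm{span}(e_1,\dots,e_m))=\#\{l\le j: w_l\le m\}$ for all $j,m$. An index $i$ is admissible if $1\le i\le n$ when $s>n-1$, and $2\le i\le n$ when $s=n-1$. For admissible $i$ put $w^{(i)}=(n-1,n-2,\dots,n-i+1,\,N,\,n-i,\dots,1)$ and let $K^i$ be the closure in $Y$ of $X^\circ_{w^{(i)}}\cap Y$.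 *)

theory Defs
  imports Complex_Main "HOL-Library.Function_Algebras"
begin

text \<open>Vectors of C^N are modelled as functions nat => complex vanishing outside {1..N}.
  Coordinate k of v is v k; e_m is ebasis m.\<close>

definition csc :: "complex \<Rightarrow> (nat \<Rightarrow> complex) \<Rightarrow> (nat \<Rightarrow> complex)" where
  "csc c v = (\<lambda>k. c * v k)"

abbreviation cspan :: "(nat \<Rightarrow> complex) set \<Rightarrow> (nat \<Rightarrow> complex) set" where
  "cspan \<equiv> module.span csc"
abbreviation csubspace :: "(nat \<Rightarrow> complex) set \<Rightarrow> bool" where
  "csubspace \<equiv> module.subspace csc"
abbreviation cdependent :: "(nat \<Rightarrow> complex) set \<Rightarrow> bool" where
  "cdependent \<equiv> module.dependent csc"
abbreviation cdim :: "(nat \<Rightarrow> complex) set \<Rightarrow> nat" where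
  "cdim \<equiv> vector_space.dim csc"

definition bigN :: "nat \<Rightarrow> nat \<Rightarrow> nat" where
  "bigN n s = n + s - 1"

definition CN :: "nat \<Rightarrow> (nat \<Rightarrow> complex) set" where
  "CN N = {v. \<forall>k. k \<notin> {1..N} \<longrightarrow> v k = 0}"

definition ebasis :: "nat \<Rightarrow> nat \<Rightarrow> complex" where
  "ebasis m = (\<lambda>k. if k = m then 1 else 0)"

text \<open>The nilpotent map x: x e_m = e_(m-(n-1)) for n <= m <= 2n-2, x e_m = 0 otherwise.
  In coordinates: (x v)_k = v_(k+n-1) for 1 <= k <= n-1 and 0 otherwise.\<close>
definition xmap :: "nat \<Rightarrow> (nat \<Rightarrow> complex) \<Rightarrow> (nat \<Rightarrow> complex)" where
  "xmap n v = (\<lambda>k. if 1 \<le> k \<and> k \<le> n - 1 then v (k + (n - 1)) else 0)"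

definition im_x :: "nat \<Rightarrow> nat \<Rightarrow> (nat \<Rightarrow> complex) set" where
  "im_x n s = xmap n ` CN (bigN n s)"

definition xpre :: "nat \<Rightarrow> nat \<Rightarrow> (nat \<Rightarrow> complex) set \<Rightarrow> (nat \<Rightarrow> complex) set" where
  "xpre n s V = {v \<in> CN (bigN n s). xmap n v \<in> V}"

text \<open>A partial flag V_0 \<subset> ... \<subset> V_n in C^N is a function j \<mapsto> V j; by convention V j = {} for j > n.\<close>
definition Fl :: "nat \<Rightarrow> nat \<Rightarrow> (nat \<Rightarrow> (nat \<Rightarrow> complex) set) set" where
  "Fl n s = {V. (\<forall>j\<le>n. csubspace (V j) \<and> V j \<subseteq> CN (bigN n s) \<and> cdim (V j) = j)
              \<and> (\<forall>j<n. V j \<subseteq> V (Suc j)) \<and> (\<forall>j>n. V j = {})}"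

definition Yfib :: "nat \<Rightarrow> nat \<Rightarrow> (nat \<Rightarrow> (nat \<Rightarrow> complex) set) set" where
  "Yfib n s = {V \<in> Fl n s. im_x n s \<subseteq> V n \<and> (\<forall>j\<le>n. xmap n ` V j \<subseteq> V j)}"

definition schubert_cell :: "nat \<Rightarrow> nat \<Rightarrow> (nat \<Rightarrow> nat) \<Rightarrow> (nat \<Rightarrow> (nat \<Rightarrow> complex) set) set" where
  "schubert_cell n s w = {V \<in> Fl n s. \<forall>j\<le>n. \<forall>m\<le>bigN n s.
      cdim (V j \<inter> cspan (ebasis ` {1..m})) = card {l \<in> {1..j}. w l \<le> m}}"

definition wi :: "nat \<Rightarrow> nat \<Rightarrow> nat \<Rightarrow> nat \<Rightarrow> nat" where
  "wi n s i l = (if l < i then n - l else if l = i then bigN n s else n + 1 - l)"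

definition admissible :: "nat \<Rightarrow> nat \<Rightarrow> nat \<Rightarrow> bool" where
  "admissible n s i = ((s > n - 1 \<and> 1 \<le> i \<and> i \<le> n) \<or> (s = n - 1 \<and> 2 \<le> i \<and> i \<le> n))"

text \<open>Classical topology on the flag variety, via adapted bases: b_1..b_n linearly
  independent in C^N determine the flag V_j = span(b_1..b_j).\<close>
definition valid_basis :: "nat \<Rightarrow> nat \<Rightarrow> (nat \<Rightarrow> nat \<Rightarrow> complex) \<Rightarrow> bool" where
  "valid_basis n s b = ((\<forall>l\<in>{1..n}. b l \<in> CN (bigN n s)) \<and> inj_on b {1..n}
                        \<and> \<not> cdependent (b ` {1..n}))"

definition flag_of :: "nat \<Rightarrow> (nat \<Rightarrow> nat \<Rightarrow> complex) \<Rightarrow> nat \<Rightarrow> (nat \<Rightarrow> complex) set" where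
  "flag_of n b = (\<lambda>j. if j \<le> n then cspan (b ` {1..j}) else {})"

text \<open>Closure of S inside Y for the classical (analytic) topology of the flag variety:
  limits of sequences of flags in S, where convergence of flags means convergence of
  suitable adapted bases (the quotient map from adapted bases to flags is open).\<close>
definition closure_in_Y :: "nat \<Rightarrow> nat \<Rightarrow> (nat \<Rightarrow> (nat \<Rightarrow> complex) set) set
                              \<Rightarrow> (nat \<Rightarrow> (nat \<Rightarrow> complex) set) set" where
  "closure_in_Y n s S = {V \<in> Yfib n s. \<exists>b bk. valid_basis n s b \<and> flag_of n b = V
      \<and> (\<forall>k. valid_basis n s (bk k) \<and> flag_of n (bk k) \<in> S)
      \<and> (\<forall>l\<in>{1..n}. \<forall>c. (\<lambda>k. bk k l c) \<longlonglongrightarrow> b l c)}"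

definition Kcomp :: "nat \<Rightarrow> nat \<Rightarrow> nat \<Rightarrow> (nat \<Rightarrow> (nat \<Rightarrow> complex) set) set" where
  "Kcomp n s i = closure_in_Y n s (schubert_cell n s (wi n s i) \<inter> Yfib n s)"

definition Zcomp :: "nat \<Rightarrow> nat \<Rightarrow> nat \<Rightarrow> (nat \<Rightarrow> (nat \<Rightarrow> complex) set) set" where
  "Zcomp n s i = {V \<in> Fl n s. V (i - 1) \<subseteq> im_x n s \<and> im_x n s \<subseteq> V n
                   \<and> V n \<subseteq> xpre n s (V (i - 1))}"

end

theory Submission
  imports Defs
begin



interpretation cv: vector_space csc
  by unfold_locales (auto simp: csc_def fun_eq_iff algebra_simps)

lemma sum_fun_apply: "(\<Sum>j\<in>J. f j) x = (\<Sum>j\<in>J. (f j x :: complex))"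
  by (induction J rule: infinite_finite_induct) auto

lemma csc_apply[simp]: "csc c v x = c * v x" by (simp add: csc_def)

lemma CN_subspace: "csubspace (CN m)"
  unfolding cv.subspace_def CN_def by auto

lemma ebasis_CN: "k \<in> {1..m} \<Longrightarrow> ebasis k \<in> CN m"
  unfolding CN_def ebasis_def by auto

lemma CN_sum: "v \<in> CN m \<Longrightarrow> v = (\<Sum>k\<in>{1..m}. csc (v k) (ebasis k))"
proof (rule ext)
  fix x assume v: "v \<in> CN m"
  have "(\<Sum>k\<in>{1..m}. csc (v k) (ebasis k)) x = (\<Sum>k\<in>{1..m}. if k = x then v k else 0)"
    unfolding sum_fun_apply csc_apply ebasis_def by (rule sum.cong) auto
  also have "\<dots> = v x" using v by (simp add: sum.delta CN_def)
  finally show "v x = (\<Sum>k\<in>{1..m}. csc (v k) (ebasis k)) x" by simp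
qed

lemma span_ebasis: "cspan (ebasis ` {1..m}) = CN m"
proof
  show "cspan (ebasis ` {1..m}) \<subseteq> CN m"
    by (rule cv.span_minimal) (auto simp: CN_subspace ebasis_CN)
  show "CN m \<subseteq> cspan (ebasis ` {1..m})"
  proof
    fix v assume "v \<in> CN m"
    then have "v = (\<Sum>k\<in>{1..m}. csc (v k) (ebasis k))" by (rule CN_sum)
    also have "\<dots> \<in> cspan (ebasis ` {1..m})"
      by (rule cv.span_sum, rule cv.span_scale, rule cv.span_base) auto
    finally show "v \<in> cspan (ebasis ` {1..m})" .
  qed
qed

lemma inj_ebasis: "inj ebasis"
  by (auto simp: inj_def ebasis_def fun_eq_iff)

lemma indep_ebasis: "\<not> cdependent (ebasis ` {1..m})"
proof -
  have "\<not> cdependent (ebasis ` {1..m})"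
  proof (rule cv.independent_if_scalars_zero)
    fix f x assume h: "(\<Sum>x\<in>ebasis ` {1..m}. csc (f x) x) = 0" and x: "x \<in> ebasis ` {1..m}"
    then obtain k where k: "k \<in> {1..m}" "x = ebasis k" by auto
    have "(\<Sum>x\<in>ebasis ` {1..m}. csc (f x) x) k = 0" using h by simp
    then have "(\<Sum>j\<in>{1..m}. f (ebasis j) * ebasis j k) = 0"
      by (simp add: sum_fun_apply sum.reindex inj_on_subset[OF inj_ebasis])
    moreover have "(\<Sum>j\<in>{1..m}. f (ebasis j) * ebasis j k) = (\<Sum>j\<in>{1..m}. if j = k then f (ebasis j) else 0)"
      by (rule sum.cong) (auto simp: ebasis_def)
    moreover have "(\<Sum>j\<in>{1..m}. if j = k then f (ebasis j) else 0) = f (ebasis k)"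
      using k by (simp add: sum.delta')
    ultimately show "f x = 0" using k by simp
  qed auto
  then show ?thesis .
qed

lemma card_ebasis: "card (ebasis ` {1..m}) = m"
  by (simp add: card_image inj_on_subset[OF inj_ebasis])

lemma dim_CN: "cdim (CN m) = m"
  by (metis span_ebasis cv.dim_span cv.dim_eq_card_independent indep_ebasis card_ebasis)

lemma finite_indep_in_CN:
  assumes "\<not> cdependent B" "B \<subseteq> CN m" shows "finite B \<and> card B \<le> m"
  using cv.independent_span_bound[of "ebasis ` {1..m}" B] assms span_ebasis card_ebasis by auto

lemma dim_eq_subspace:
  assumes U: "csubspace U" and T: "csubspace T" and UT: "U \<subseteq> T" and TC: "T \<subseteq> CN m"
    and d: "cdim U = cdim T"
  shows "U = T"
proof (rule ccontr)
  assume "U \<noteq> T"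
  then obtain t where t: "t \<in> T" "t \<notin> U" using UT by auto
  obtain B where B: "B \<subseteq> U" "\<not> cdependent B" "U \<subseteq> cspan B" "card B = cdim U"
    using cv.basis_exists by blast
  obtain B' where B': "B' \<subseteq> T" "\<not> cdependent B'" "T \<subseteq> cspan B'" "card B' = cdim T"
    using cv.basis_exists by blast
  have fB: "finite B" using finite_indep_in_CN[of B m] B UT TC by auto
  have fB': "finite B'" using finite_indep_in_CN[of B' m] B' TC by auto
  have "cspan B \<subseteq> U" using B U by (simp add: cv.span_minimal)
  then have "t \<notin> cspan B" using t by auto
  then have ind: "\<not> cdependent (insert t B)" using cv.independent_insertI B by blast
  have "insert t B \<subseteq> cspan B'" using B' B UT t cv.span_superset by blast
  then have "card (insert t B) \<le> card B'"
    using cv.independent_span_bound[OF fB' ind] by auto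
  moreover have "t \<notin> B" using t B by auto
  ultimately show False using fB B B' d by simp
qed




lemma span_explicitD:
  assumes "finite J" "u \<in> cspan (a ` J)"
  shows "\<exists>c. \<forall>x. u x = (\<Sum>j\<in>J. c j * a j x)"
proof -
  let ?P = "{u. \<exists>c. \<forall>x. u x = (\<Sum>j\<in>J. c j * a j x)}"
  have "csubspace ?P"
    unfolding cv.subspace_def
  proof (intro conjI ballI allI)
    show "0 \<in> ?P" by (auto intro!: exI[of _ "\<lambda>_. 0"])
    fix v w assume "v \<in> ?P" "w \<in> ?P"
    then obtain c d where "\<forall>x. v x = (\<Sum>j\<in>J. c j * a j x)" "\<forall>x. w x = (\<Sum>j\<in>J. d j * a j x)" by auto
    then show "v + w \<in> ?P"
      by (auto intro!: exI[of _ "\<lambda>j. c j + d j"] simp: sum.distrib algebra_simps)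
  next
    fix r v assume "v \<in> ?P"
    then obtain c where "\<forall>x. v x = (\<Sum>j\<in>J. c j * a j x)" by auto
    then show "csc r v \<in> ?P"
      by (auto intro!: exI[of _ "\<lambda>j. r * c j"] simp: sum_distrib_left algebra_simps)
  qed
  moreover have "a ` J \<subseteq> ?P"
  proof
    fix v assume "v \<in> a ` J"
    then obtain j0 where j0: "j0 \<in> J" "v = a j0" by auto
    have "\<forall>x. v x = (\<Sum>j\<in>J. (if j = j0 then 1 else 0) * a j x)"
    proof
      fix x
      have "(\<Sum>j\<in>J. (if j = j0 then 1 else 0) * a j x) = (\<Sum>j\<in>J. if j = j0 then a j x else 0)"
        by (rule sum.cong) auto
      then show "v x = (\<Sum>j\<in>J. (if j = j0 then 1 else 0) * a j x)"
        using j0 assms(1) by (simp add: sum.delta')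
    qed
    then show "v \<in> ?P" by (intro CollectI exI[of _ "\<lambda>j. if j = j0 then 1 else 0"])
  qed
  ultimately have "cspan (a ` J) \<subseteq> ?P" by (rule cv.span_minimal[rotated])
  then show ?thesis using assms(2) by auto
qed

lemma span_explicitI:
  assumes "\<forall>x. u x = (\<Sum>j\<in>J. c j * a j x)"
  shows "u \<in> cspan (a ` J)"
proof -
  have "u = (\<Sum>j\<in>J. csc (c j) (a j))"
    using assms by (auto simp: fun_eq_iff sum_fun_apply)
  also have "\<dots> \<in> cspan (a ` J)"
    by (rule cv.span_sum, rule cv.span_scale, rule cv.span_base) auto
  finally show ?thesis .
qed

lemma indep_explicit:
  assumes ind: "\<not> cdependent (a ` I)" and inj: "inj_on a I" and JI: "J \<subseteq> I" and fin: "finite J"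
    and z: "\<forall>x. (\<Sum>j\<in>J. c j * a j x) = 0" and j: "j \<in> J"
  shows "c j = 0"
proof -
  have ind': "\<not> cdependent (a ` J)" using cv.independent_mono[OF ind] JI by (meson image_mono)
  have injJ: "inj_on a J" using inj_on_subset[OF inj JI] .
  define u where "u v = c (the_inv_into J a v)" for v
  have "(\<Sum>v\<in>a ` J. csc (u v) v) = (\<Sum>j\<in>J. csc (u (a j)) (a j))"
    by (rule sum.reindex[OF injJ, unfolded comp_def])
  also have "\<dots> = (\<Sum>j\<in>J. csc (c j) (a j))"
    by (rule sum.cong) (auto simp: u_def the_inv_into_f_f[OF injJ])
  also have "\<dots> = 0" using z by (auto simp: fun_eq_iff sum_fun_apply)
  finally have "(\<Sum>v\<in>a ` J. csc (u v) v) = 0" .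
  then have "\<forall>v\<in>a ` J. u v = 0"
    using cv.dependent_finite[of "a ` J"] ind' fin by auto
  then have "u (a j) = 0" using j by auto
  then show ?thesis by (simp add: u_def the_inv_into_f_f[OF injJ j])
qed




lemma sum_elim: "(\<Sum>j\<in>J. c j * (f j - g j / q * h)) = (\<Sum>j\<in>J. c j * f j) - (\<Sum>j\<in>J. c j * g j) / q * (h::complex)"
  by (simp add: algebra_simps sum_subtractf sum_distrib_left sum_distrib_right sum_divide_distrib)

lemma sum_upd_out: "r \<notin> J \<Longrightarrow> (\<Sum>j\<in>J. (c(r:=v)) j * f j) = (\<Sum>j\<in>J. c j * (f j :: complex))"
  by (rule sum.cong) auto

lemma span_limit:
  fixes A :: "nat \<Rightarrow> nat \<Rightarrow> nat \<Rightarrow> complex" and a :: "nat \<Rightarrow> nat \<Rightarrow> complex"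
    and u :: "nat \<Rightarrow> nat \<Rightarrow> complex" and u0 :: "nat \<Rightarrow> complex"
  assumes "finite J"
    and "\<forall>j\<in>J. \<forall>x. (\<lambda>k. A k j x) \<longlonglongrightarrow> a j x"
    and "\<forall>c. (\<forall>x. (\<Sum>j\<in>J. c j * a j x) = 0) \<longrightarrow> (\<forall>j\<in>J. c j = 0)"
    and "\<forall>x. (\<lambda>k. u k x) \<longlonglongrightarrow> u0 x"
    and "eventually (\<lambda>k. \<exists>c. \<forall>x. u k x = (\<Sum>j\<in>J. c j * A k j x)) sequentially"
  shows "\<exists>c. \<forall>x. u0 x = (\<Sum>j\<in>J. c j * a j x)"
  using assms
proof (induction J arbitrary: A a u u0 rule: finite_induct)
  case empty
  show ?case
  proof (intro exI allI)
    fix x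
    have "eventually (\<lambda>k. u k x = 0) sequentially"
      using empty.prems(4) by (rule eventually_mono) simp
    then have "(\<lambda>k. u k x) \<longlonglongrightarrow> 0" by (rule tendsto_eventually)
    then have "u0 x = 0" using empty.prems(3) LIMSEQ_unique by blast
    then show "u0 x = (\<Sum>j\<in>{}. (\<lambda>_. 0) j * a j x)" by simp
  qed
next
  case (insert r J)
  note fin = insert.hyps(1) and rJ = insert.hyps(2)
  have ind: "\<And>c. (\<forall>x. (\<Sum>j\<in>insert r J. c j * a j x) = 0) \<Longrightarrow> (\<forall>j\<in>insert r J. c j = 0)"
    using insert.prems(2) by blast
  have "\<exists>p. a r p \<noteq> 0"
  proof (rule ccontr)
    assume "\<not> ?thesis"
    then have "\<forall>x. (\<Sum>j\<in>insert r J. (\<lambda>j. if j = r then 1 else 0) j * a j x) = 0"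
      using fin rJ by (auto intro!: sum.neutral)
    then show False using ind by fastforce
  qed
  then obtain p where p: "a r p \<noteq> 0" by blast
  have limr: "\<And>x. (\<lambda>k. A k r x) \<longlonglongrightarrow> a r x" using insert.prems(1) by auto
  define A' where "A' k j x = A k j x - A k j p / A k r p * A k r x" for k j x
  define a' where "a' j x = a j x - a j p / a r p * a r x" for j x
  define u' where "u' k x = u k x - u k p / A k r p * A k r x" for k x
  define u0' where "u0' x = u0 x - u0 p / a r p * a r x" for x
  have L1: "\<forall>j\<in>J. \<forall>x. (\<lambda>k. A' k j x) \<longlonglongrightarrow> a' j x"
  proof (intro ballI allI)
    fix j x assume "j \<in> J"
    then have "(\<lambda>k. A k j x) \<longlonglongrightarrow> a j x" "(\<lambda>k. A k j p) \<longlonglongrightarrow> a j p"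
      using insert.prems(1) by auto
    then show "(\<lambda>k. A' k j x) \<longlonglongrightarrow> a' j x"
      unfolding A'_def a'_def using limr[of x] limr[of p] p
      by (intro tendsto_intros) auto
  qed
  have L2: "\<forall>c. (\<forall>x. (\<Sum>j\<in>J. c j * a' j x) = 0) \<longrightarrow> (\<forall>j\<in>J. c j = 0)"
  proof (intro allI impI)
    fix c assume h: "\<forall>x. (\<Sum>j\<in>J. c j * a' j x) = 0"
    define c' where "c' = c(r := - (\<Sum>j\<in>J. c j * a j p) / a r p)"
    have "\<forall>x. (\<Sum>j\<in>insert r J. c' j * a j x) = 0"
    proof
      fix x
      have "(\<Sum>j\<in>insert r J. c' j * a j x) = c' r * a r x + (\<Sum>j\<in>J. c j * a j x)"
      proof -
        have "(\<Sum>j\<in>J. c' j * a j x) = (\<Sum>j\<in>J. c j * a j x)"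
          unfolding c'_def by (rule sum_upd_out[OF rJ])
        then show ?thesis using fin rJ by (simp add: c'_def)
      qed
      also have "\<dots> = (\<Sum>j\<in>J. c j * a' j x)"
        unfolding a'_def sum_elim by (simp add: c'_def algebra_simps)
      finally show "(\<Sum>j\<in>insert r J. c' j * a j x) = 0" using h by simp
    qed
    then have "\<forall>j\<in>insert r J. c' j = 0" by (rule ind)
    then show "\<forall>j\<in>J. c j = 0" using rJ by (auto simp: c'_def split: if_splits)
  qed
  have L3: "\<forall>x. (\<lambda>k. u' k x) \<longlonglongrightarrow> u0' x"
  proof
    fix x
    have "(\<lambda>k. u k x) \<longlonglongrightarrow> u0 x" "(\<lambda>k. u k p) \<longlonglongrightarrow> u0 p" using insert.prems(3) by auto
    then show "(\<lambda>k. u' k x) \<longlonglongrightarrow> u0' x"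
      unfolding u'_def u0'_def using limr[of x] limr[of p] p
      by (intro tendsto_intros) auto
  qed
  have ev0: "eventually (\<lambda>k. A k r p \<noteq> 0) sequentially"
    using tendsto_imp_eventually_ne[OF limr[of p] p] .
  have L4: "eventually (\<lambda>k. \<exists>c. \<forall>x. u' k x = (\<Sum>j\<in>J. c j * A' k j x)) sequentially"
    using ev0 insert.prems(4)
  proof eventually_elim
    case (elim k)
    then obtain c where c: "\<forall>x. u k x = (\<Sum>j\<in>insert r J. c j * A k j x)" by blast
    have "\<forall>x. u' k x = (\<Sum>j\<in>J. c j * A' k j x)"
    proof
      fix x
      have e: "\<And>y. u k y = c r * A k r y + (\<Sum>j\<in>J. c j * A k j y)"
        using c fin rJ by simp
      show "u' k x = (\<Sum>j\<in>J. c j * A' k j x)"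
        unfolding u'_def A'_def sum_elim e using elim(1)
        by (simp add: field_simps)
    qed
    then show ?case by blast
  qed
  obtain d where d: "\<forall>x. u0' x = (\<Sum>j\<in>J. d j * a' j x)"
    using insert.IH[OF L1 L2 L3 L4] by blast
  define c where "c = d(r := (u0 p - (\<Sum>j\<in>J. d j * a j p)) / a r p)"
  have "\<forall>x. u0 x = (\<Sum>j\<in>insert r J. c j * a j x)"
  proof
    fix x
    have "u0 x = u0' x + u0 p / a r p * a r x" by (simp add: u0'_def)
    also have "\<dots> = (\<Sum>j\<in>J. d j * a j x) - (\<Sum>j\<in>J. d j * a j p) / a r p * a r x + u0 p / a r p * a r x"
      using d unfolding a'_def sum_elim by simp
    also have "\<dots> = c r * a r x + (\<Sum>j\<in>J. c j * a j x)"
    proof -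
      have "(\<Sum>j\<in>J. c j * a j x) = (\<Sum>j\<in>J. d j * a j x)"
        unfolding c_def by (rule sum_upd_out[OF rJ])
      then show ?thesis using p by (simp add: c_def field_simps)
    qed
    also have "\<dots> = (\<Sum>j\<in>insert r J. c j * a j x)" using fin rJ by simp
    finally show "u0 x = (\<Sum>j\<in>insert r J. c j * a j x)" .
  qed
  then show ?case by blast
qed




lemma xmap_CN: "xmap n v \<in> CN (n - 1)"
  by (auto simp: xmap_def CN_def)

lemma im_x_eq:
  assumes "n \<ge> 2" "s \<ge> n - 1" shows "im_x n s = CN (n - 1)"
proof
  show "im_x n s \<subseteq> CN (n - 1)" unfolding im_x_def using xmap_CN by auto
  show "CN (n - 1) \<subseteq> im_x n s"
  proof
    fix v assume v: "v \<in> CN (n - 1)"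
    define w where "w k = (if n \<le> k \<and> k \<le> 2 * n - 2 then v (k - (n - 1)) else 0)" for k
    have "w \<in> CN (bigN n s)" using assms by (auto simp: w_def CN_def bigN_def)
    moreover have "xmap n w = v"
    proof
      fix k
      show "xmap n w k = v k"
        using v assms by (auto simp: xmap_def w_def CN_def)
    qed
    ultimately show "v \<in> im_x n s" unfolding im_x_def by force
  qed
qed

lemma xmap_diff: "xmap n (u - csc c v) = xmap n u - csc c (xmap n v)"
  by (auto simp: xmap_def fun_eq_iff)

lemma xmap_add: "xmap n (u + v) = xmap n u + xmap n v"
  by (auto simp: xmap_def fun_eq_iff)

lemma xmap_scale: "xmap n (csc c v) = csc c (xmap n v)"
  by (auto simp: xmap_def fun_eq_iff)

lemma xmap_zero: "xmap n 0 = 0"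
  by (auto simp: xmap_def fun_eq_iff)

lemma xmap_kill:
  assumes "w \<in> CN (n - 1)" shows "xmap n w = 0"
proof (rule ext)
  fix x
  show "xmap n w x = 0 x"
  proof (cases "1 \<le> x \<and> x \<le> n - 1")
    case True
    then have "x + (n - 1) \<notin> {1..n - 1}" by auto
    then show ?thesis using assms True by (simp add: xmap_def CN_def)
  qed (auto simp: xmap_def)
qed

lemma CN_pred: "v \<in> CN N \<Longrightarrow> v N = 0 \<Longrightarrow> v \<in> CN (N - 1)"
  unfolding CN_def
proof (intro CollectI allI impI)
  fix k assume "v \<in> {v. \<forall>k. k \<notin> {1..N} \<longrightarrow> v k = 0}" "v N = 0" "k \<notin> {1..N - 1}"
  then show "v k = 0" by (cases "k = N") auto
qed

lemma Fl_chain: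
  assumes "V \<in> Fl n s" "j \<le> j'" "j' \<le> n" shows "V j \<subseteq> V j'"
  using assms(2,3)
proof (induction j' rule: dec_induct)
  case base then show ?case by simp
next
  case (step m)
  then have "V m \<subseteq> V (Suc m)" using assms(1) by (auto simp: Fl_def)
  with step show ?case by auto
qed

lemma Fl_props:
  assumes "V \<in> Fl n s" "j \<le> n"
  shows "csubspace (V j)" "V j \<subseteq> CN (bigN n s)" "cdim (V j) = j"
  using assms by (auto simp: Fl_def)

lemma cell_Z:
  assumes n2: "n \<ge> 2" and sn: "s \<ge> n - 1" and i1: "1 \<le> i" and iN: "i \<le> n"
    and Wc: "W \<in> schubert_cell n s (wi n s i)" and WY: "W \<in> Yfib n s"
  shows "W (i - 1) \<subseteq> CN (n - 1)" "\<forall>u\<in>W n. xmap n u \<in> W (i - 1)"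
proof -
  define N where "N = bigN n s"
  have N: "N = n + s - 1" "N \<ge> 2 * n - 2" "N \<ge> n" using n2 sn by (auto simp: N_def bigN_def)
  have WF: "W \<in> Fl n s" using WY by (simp add: Yfib_def)
  have cell: "\<And>j m. j \<le> n \<Longrightarrow> m \<le> N \<Longrightarrow> cdim (W j \<inter> CN m) = card {l \<in> {1..j}. wi n s i l \<le> m}"
  proof -
    have se: "\<And>m. cspan (ebasis ` {Suc 0..m}) = CN m" using span_ebasis by simp
    fix j m assume "j \<le> n" "m \<le> N"
    then show "cdim (W j \<inter> CN m) = card {l \<in> {1..j}. wi n s i l \<le> m}"
      using Wc by (auto simp: schubert_cell_def se N_def)
  qed
  have wi_lt: "\<And>l. l < i \<Longrightarrow> wi n s i l = n - l" by (simp add: wi_def)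
  have wi_i: "wi n s i i = N" by (simp add: wi_def N_def)
  have wi_gt: "\<And>l. l > i \<Longrightarrow> wi n s i l = n + 1 - l" by (simp add: wi_def)
  have c1: "{l \<in> {1..i - 1}. wi n s i l \<le> n - 1} = {1..i - 1}" using wi_lt by auto
  have c2: "{l \<in> {1..i}. wi n s i l \<le> n - 1} = {1..i - 1}"
  proof (rule set_eqI)
    fix l
    show "l \<in> {l \<in> {1..i}. wi n s i l \<le> n - 1} \<longleftrightarrow> l \<in> {1..i - 1}"
    proof (cases "l = i")
      case True then show ?thesis using wi_i N n2 by auto
    next
      case False then show ?thesis using wi_lt[of l] i1 by auto
    qed
  qed
  have c3: "{l \<in> {1..i}. wi n s i l \<le> N - 1} = {1..i - 1}"
  proof (rule set_eqI)
    fix l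
    show "l \<in> {l \<in> {1..i}. wi n s i l \<le> N - 1} \<longleftrightarrow> l \<in> {1..i - 1}"
    proof (cases "l = i")
      case True then show ?thesis using wi_i N n2 by auto
    next
      case False then show ?thesis using wi_lt[of l] i1 N by auto
    qed
  qed
  have c4: "{l \<in> {1..n}. wi n s i l \<le> N - 1} = {1..n} - {i}"
  proof (rule set_eqI)
    fix l
    show "l \<in> {l \<in> {1..n}. wi n s i l \<le> N - 1} \<longleftrightarrow> l \<in> {1..n} - {i}"
    proof (cases "l = i")
      case True then show ?thesis using wi_i N n2 by auto
    next
      case False
      show ?thesis
      proof (cases "l < i")
        case True then show ?thesis using wi_lt[of l] i1 N by auto
      next
        case False2: False
        then have "l > i" using False by auto
        then show ?thesis using wi_gt[of l] i1 N by auto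
      qed
    qed
  qed
  have sub: "\<And>j. j \<le> n \<Longrightarrow> csubspace (W j)" "\<And>j. j \<le> n \<Longrightarrow> W j \<subseteq> CN N"
    "\<And>j. j \<le> n \<Longrightarrow> cdim (W j) = j"
    using Fl_props[OF WF] by (auto simp: N_def)
  have im: "im_x n s = CN (n - 1)" using im_x_eq[OF n2 sn] .
  have e1: "W (i - 1) \<inter> CN (n - 1) = W (i - 1)"
  proof (rule dim_eq_subspace[where m = N])
    show "cdim (W (i - 1) \<inter> CN (n - 1)) = cdim (W (i - 1))"
      using cell[of "i - 1" "n - 1"] c1 sub(3)[of "i - 1"] iN N by simp
  qed (use sub[of "i - 1"] iN CN_subspace cv.subspace_inter in auto)
  then show A: "W (i - 1) \<subseteq> CN (n - 1)" by blast
  have chain: "W (i - 1) \<subseteq> W i" using Fl_chain[OF WF, of "i - 1" i] iN by simp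
  have e2: "W (i - 1) = W i \<inter> CN (n - 1)"
  proof (rule dim_eq_subspace[where m = N])
    show "cdim (W (i - 1)) = cdim (W i \<inter> CN (n - 1))"
      using cell[of i "n - 1"] c2 sub(3)[of "i - 1"] iN N by simp
  qed (use sub[of "i - 1"] sub[of i] iN CN_subspace cv.subspace_inter A chain in auto)
  obtain v where v: "v \<in> W i" "v N \<noteq> 0"
  proof (rule ccontr)
    assume "\<not> thesis"
    with that have "\<forall>v\<in>W i. v N = 0" by blast
    then have "W i \<subseteq> CN (N - 1)" using sub(2)[of i] iN CN_pred by blast
    then have "W i \<inter> CN (N - 1) = W i" by blast
    then have "i = i - 1" using cell[of i "N - 1"] c3 sub(3)[of i] iN by simp
    then show False using i1 by simp
  qed
  have xv: "xmap n v \<in> W (i - 1)"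
  proof -
    have "xmap n v \<in> W i" using WY v(1) iN by (auto simp: Yfib_def)
    then show ?thesis using e2 xmap_CN by blast
  qed
  have e5: "CN (n - 1) = W n \<inter> CN (N - 1)"
  proof (rule dim_eq_subspace[where m = N])
    show "CN (n - 1) \<subseteq> W n \<inter> CN (N - 1)"
      using WY im N by (auto simp: Yfib_def CN_def)
    show "cdim (CN (n - 1)) = cdim (W n \<inter> CN (N - 1))"
      using cell[of n "N - 1"] c4 dim_CN iN i1 by simp
  qed (use sub[of n] CN_subspace cv.subspace_inter in auto)
  show "\<forall>u\<in>W n. xmap n u \<in> W (i - 1)"
  proof
    fix u assume u: "u \<in> W n"
    have vn: "v \<in> W n" using Fl_chain[OF WF, of i n] iN v by auto
    define w where "w = u - csc (u N / v N) v"
    have wW: "w \<in> W n" unfolding w_def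
      using sub(1)[of n] u vn by (simp add: cv.subspace_diff cv.subspace_scale)
    have "w N = 0" using v(2) by (simp add: w_def)
    moreover have "w \<in> CN N" using wW sub(2)[of n] by auto
    ultimately have "w \<in> CN (N - 1)" using CN_pred by blast
    then have "w \<in> CN (n - 1)" using e5 wW by blast
    then have "xmap n w = 0" using xmap_kill by auto
    then have "xmap n u = csc (u N / v N) (xmap n v)"
      unfolding w_def xmap_diff by simp
    then show "xmap n u \<in> W (i - 1)"
      using xv sub(1)[of "i - 1"] iN by (simp add: cv.subspace_scale)
  qed
qed




theorem proposition3p5:
  fixes n s i :: nat
  assumes "n \<ge> 2" and "s \<ge> n - 1" and "admissible n s i"
  shows "Kcomp n s i \<subseteq> Zcomp n s i"
proof
  fix V assume "V \<in> Kcomp n s i"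
  then obtain b bk where VY: "V \<in> Yfib n s" and vb: "valid_basis n s b" and Vb: "flag_of n b = V"
    and bk: "\<forall>k. valid_basis n s (bk k) \<and> flag_of n (bk k) \<in> schubert_cell n s (wi n s i) \<inter> Yfib n s"
    and lim: "\<forall>l\<in>{1..n}. \<forall>c. (\<lambda>k. bk k l c) \<longlonglongrightarrow> b l c"
    unfolding Kcomp_def closure_in_Y_def by blast
  have i1: "1 \<le> i" and iN: "i \<le> n" using assms(3) by (auto simp: admissible_def)
  have VF: "V \<in> Fl n s" using VY by (simp add: Yfib_def)
  have im: "im_x n s = CN (n - 1)" using im_x_eq[OF assms(1,2)] .
  have imV: "im_x n s \<subseteq> V n" using VY by (simp add: Yfib_def)
  have Wi: "\<And>k. flag_of n (bk k) (i - 1) = cspan (bk k ` {1..i - 1})" using iN by (simp add: flag_of_def)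
  have Wn: "\<And>k. flag_of n (bk k) n = cspan (bk k ` {1..n})" by (simp add: flag_of_def)
  have Vi: "V (i - 1) = cspan (b ` {1..i - 1})" using iN unfolding Vb[symmetric] flag_of_def by simp
  have Vn: "V n = cspan (b ` {1..n})" unfolding Vb[symmetric] flag_of_def by simp
  have cz: "\<And>k. flag_of n (bk k) (i - 1) \<subseteq> CN (n - 1)"
       "\<And>k. \<forall>u\<in>flag_of n (bk k) n. xmap n u \<in> flag_of n (bk k) (i - 1)"
    using cell_Z[OF assms(1,2) i1 iN] bk by blast+
  have A: "V (i - 1) \<subseteq> CN (n - 1)"
    unfolding Vi
  proof (rule cv.span_minimal[OF _ CN_subspace], rule subsetI)
    fix v assume "v \<in> b ` {1..i - 1}"
    then obtain l where l: "l \<in> {1..i - 1}" "v = b l" by auto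
    have "\<And>k. bk k l \<in> CN (n - 1)"
      using cz(1) Wi l cv.span_base by (metis imageI subsetD)
    show "v \<in> CN (n - 1)"
      unfolding CN_def
    proof (intro CollectI allI impI)
      fix x assume x: "x \<notin> {1..n - 1}"
      have "(\<lambda>k. bk k l x) \<longlonglongrightarrow> b l x" using lim l iN by auto
      moreover have "(\<lambda>k. bk k l x) = (\<lambda>k. 0)"
        using \<open>\<And>k. bk k l \<in> CN (n - 1)\<close> x by (auto simp: CN_def)
      ultimately show "v x = 0" using l LIMSEQ_unique tendsto_const by metis
    qed
  qed
  have indb: "\<not> cdependent (b ` {1..n})" "inj_on b {1..n}" using vb by (auto simp: valid_basis_def)
  have B: "\<forall>l\<in>{1..n}. xmap n (b l) \<in> V (i - 1)"
  proof
    fix l assume l: "l \<in> {1..n}"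
    have "\<exists>c. \<forall>x. xmap n (b l) x = (\<Sum>j\<in>{1..i - 1}. c j * b j x)"
    proof (rule span_limit[where A = bk and u = "\<lambda>k. xmap n (bk k l)"])
      show "\<forall>j\<in>{1..i - 1}. \<forall>x. (\<lambda>k. bk k j x) \<longlonglongrightarrow> b j x" using lim iN by auto
      show "\<forall>c. (\<forall>x. (\<Sum>j\<in>{1..i - 1}. c j * b j x) = 0) \<longrightarrow> (\<forall>j\<in>{1..i - 1}. c j = 0)"
        using indep_explicit[OF indb, of "{1..i - 1}"] iN by auto
      show "\<forall>x. (\<lambda>k. xmap n (bk k l) x) \<longlonglongrightarrow> xmap n (b l) x"
        using lim l by (auto simp: xmap_def)
      show "eventually (\<lambda>k. \<exists>c. \<forall>x. xmap n (bk k l) x = (\<Sum>j\<in>{1..i - 1}. c j * bk k j x)) sequentially"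
      proof (rule always_eventually, rule allI)
        fix k
        have "bk k l \<in> flag_of n (bk k) n" using Wn l cv.span_base by auto
        then have "xmap n (bk k l) \<in> cspan (bk k ` {1..i - 1})" using cz(2) Wi by auto
        then show "\<exists>c. \<forall>x. xmap n (bk k l) x = (\<Sum>j\<in>{1..i - 1}. c j * bk k j x)"
          by (intro span_explicitD) auto
      qed
    qed simp
    then show "xmap n (b l) \<in> V (i - 1)" unfolding Vi using span_explicitI by blast
  qed
  have Vsub: "csubspace (V (i - 1))" unfolding Vi by simp
  have P: "csubspace {u. xmap n u \<in> V (i - 1)}"
    unfolding cv.subspace_def
    using Vsub by (auto simp: xmap_add xmap_scale xmap_zero cv.subspace_add cv.subspace_scale cv.subspace_0)
  have "V n \<subseteq> {u. xmap n u \<in> V (i - 1)}"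
    unfolding Vn using B by (intro cv.span_minimal[OF _ P]) auto
  moreover have "V n \<subseteq> CN (bigN n s)" using Fl_props[OF VF, of n] by simp
  ultimately have "V n \<subseteq> xpre n s (V (i - 1))" by (auto simp: xpre_def)
  then show "V \<in> Zcomp n s i" using VF A im imV by (auto simp: Zcomp_def)
qed


end
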